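(* Let $X$ be an arbitrary topological space and let $U\subseteq X$ be a subset consisting of pairwise topologically indistinguishable points (i.e. for every open $V\subseteq X$, if $U\cap V\neq\emptyset$ then $U\subseteq V$). Let $f:X\to X$ be a (not necessarily continuous) bijection such that $f|_{X\setminus U}$ is the identity. Then (1) $f$ is a homeomorphism; and (2) $f$ and $\mathrm{Id}_X$ are isotopic, and moreover isotopic relative to $X\setminus U$ (i.e. via an isotopy $H$ with $H(x,t)=x$ for all $x\in X\setminus U$ and all $t$).
   Context: Two homeomorphisms $f,g$ of $X$ are isotopic if there is a continuous map $H:X\times[0,1]\to X$ such that each $H_t=H(\cdot,t)$ is a homeomorphism of $X$, $H_0=f$ and $H_1=g$. *)

theory Defs
  imports "HOL-Analysis.Analysis"
begin

definition isotopic_rel :: "'a topology \<Rightarrow> 'a set \<Rightarrow> ('a \<Rightarrow> 'a) \<Rightarrow> ('a \<Rightarrow> 'a) \<Rightarrow> bool" where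
  "isotopic_rel X A f g \<longleftrightarrow>
    (\<exists>H. continuous_map (prod_topology X (top_of_set {0..1::real})) X H \<and>
         (\<forall>t\<in>{0..1}. homeomorphic_map X X (\<lambda>x. H (x, t))) \<and>
         (\<forall>x\<in>topspace X. H (x, 0) = f x \<and> H (x, 1) = g x) \<and>
         (\<forall>x\<in>A. \<forall>t\<in>{0..1}. H (x, t) = x))"

definition isotopic :: "'a topology \<Rightarrow> ('a \<Rightarrow> 'a) \<Rightarrow> ('a \<Rightarrow> 'a) \<Rightarrow> bool" where
  "isotopic X f g \<longleftrightarrow> isotopic_rel X {} f g"

end

theory Submission
  imports Defs
begin

lemma preimage_eq:
  assumes "U \<subseteq> topspace X"
    and ind: "\<And>V. openin X V \<Longrightarrow> U \<inter> V \<noteq> {} \<Longrightarrow> U \<subseteq> V"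
    and fix1: "\<And>x. x \<in> topspace X - U \<Longrightarrow> g x = x"
    and inU: "\<And>x. x \<in> U \<Longrightarrow> g x \<in> U"
    and V: "openin X V"
  shows "{x \<in> topspace X. g x \<in> V} = V"
proof -
  have Vs: "V \<subseteq> topspace X" using V openin_subset by blast
  have gt: "g x \<in> topspace X" if "x \<in> topspace X" for x
    using that fix1 inU assms(1) by (cases "x \<in> U") auto
  show ?thesis
  proof (cases "U \<inter> V = {}")
    case True
    have "g x \<in> V \<longleftrightarrow> x \<in> V" if "x \<in> topspace X" for x
    proof (cases "x \<in> U")
      case True
      then show ?thesis using inU \<open>U \<inter> V = {}\<close> by blast
    next
      case False
      then show ?thesis using fix1 that by simp
    qed
    then show ?thesis using Vs by blast
  next
    case False
    then have UV: "U \<subseteq> V" using ind V by blast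
    have "g x \<in> V \<longleftrightarrow> x \<in> V" if "x \<in> topspace X" for x
    proof (cases "x \<in> U")
      case True
      then show ?thesis using inU UV by blast
    next
      case False
      then show ?thesis using fix1 that by simp
    qed
    then show ?thesis using Vs by blast
  qed
qed

lemma fU:
  assumes "U \<subseteq> topspace X"
    and b: "bij_betw f (topspace X) (topspace X)"
    and fix1: "\<And>x. x \<in> topspace X - U \<Longrightarrow> f x = x"
    and x: "x \<in> U"
  shows "f x \<in> U"
proof (rule ccontr)
  assume n: "f x \<notin> U"
  have xt: "x \<in> topspace X" using x assms(1) by (rule subsetD[rotated])
  have ft: "f x \<in> topspace X" using b xt by (rule bij_betw_apply)
  have "f x \<in> topspace X - U" using ft n by (rule DiffI)
  then have ffx: "f (f x) = f x" by (rule fix1)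
  have inj: "inj_on f (topspace X)" using b by (rule bij_betw_imp_inj_on)
  have "f x = x" using inj ffx ft xt by (rule inj_onD)
  then show False using n x by simp
qed

lemma cont:
  assumes "U \<subseteq> topspace X"
    and ind: "\<And>V. openin X V \<Longrightarrow> U \<inter> V \<noteq> {} \<Longrightarrow> U \<subseteq> V"
    and fix1: "\<And>x. x \<in> topspace X - U \<Longrightarrow> g x = x"
    and inU: "\<And>x. x \<in> U \<Longrightarrow> g x \<in> U"
  shows "continuous_map X X g"
  unfolding continuous_map_def
proof (intro conjI allI impI)
  show "g \<in> topspace X \<rightarrow> topspace X"
  proof
    fix x assume "x \<in> topspace X"
    then show "g x \<in> topspace X" using fix1 inU assms(1) by (cases "x \<in> U") auto
  qed
  fix V assume "openin X V"
  then show "openin X {x \<in> topspace X. g x \<in> V}"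
    using preimage_eq[OF assms \<open>openin X V\<close>] by simp
qed

lemma homeo:
  assumes "U \<subseteq> topspace X"
    and ind: "\<And>V. openin X V \<Longrightarrow> U \<inter> V \<noteq> {} \<Longrightarrow> U \<subseteq> V"
    and b: "bij_betw f (topspace X) (topspace X)"
    and fix1: "\<And>x. x \<in> topspace X - U \<Longrightarrow> f x = x"
  shows "homeomorphic_map X X f"
proof (rule bijective_open_imp_homeomorphic_map)
  have inU: "\<And>x. x \<in> U \<Longrightarrow> f x \<in> U" using fU[OF assms(1) b fix1] by simp
  show "continuous_map X X f" using cont[OF assms(1) ind fix1 inU] .
  show sur: "f ` topspace X = topspace X" using b by (rule bij_betw_imp_surj_on)
  show "inj_on f (topspace X)" using b by (rule bij_betw_imp_inj_on)
  show "open_map X X f"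
    unfolding open_map_def
  proof (intro allI impI)
    fix V assume V: "openin X V"
    have Vs: "V \<subseteq> topspace X" using V by (rule openin_subset)
    have "f ` V = V"
    proof
      show "f ` V \<subseteq> V"
      proof (rule image_subsetI)
        fix x assume x: "x \<in> V"
        show "f x \<in> V"
        proof (cases "x \<in> U")
          case True
          then have "U \<inter> V \<noteq> {}" using x by blast
          then have "U \<subseteq> V" using V by (intro ind)
          moreover have "f x \<in> U" using True by (rule inU)
          ultimately show ?thesis by (rule subsetD)
        next
          case False
          then have "x \<in> topspace X - U" using x Vs by blast
          then have "f x = x" by (rule fix1)
          then show ?thesis using x by simp
        qed
      qed
      show "V \<subseteq> f ` V"
      proof
        fix y assume y: "y \<in> V"
        then have "y \<in> f ` topspace X" using Vs sur by blast
        then obtain x where x: "x \<in> topspace X" and yx: "y = f x" by (rule imageE) simp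
        show "y \<in> f ` V"
        proof (cases "x \<in> U")
          case True
          then have "y \<in> U" unfolding yx by (rule inU)
          then have "U \<inter> V \<noteq> {}" using y by blast
          then have "U \<subseteq> V" using V by (intro ind)
          then have "x \<in> V" using True by (rule subsetD)
          then show ?thesis unfolding yx by (rule imageI)
        next
          case False
          then have "x \<in> topspace X - U" using x by (rule DiffI[rotated])
          then have "f x = x" by (rule fix1)
          then have "x = y" using yx by simp
          then have "x \<in> V" using y by simp
          then show ?thesis unfolding yx by (rule imageI)
        qed
      qed
    qed
    then show "openin X (f ` V)" using V by simp
  qed
qed

lemma rel_empty: "isotopic_rel X A f g \<Longrightarrow> isotopic_rel X {} f g"
  unfolding isotopic_rel_def
proof -
  assume "\<exists>H. continuous_map (prod_topology X (top_of_set {0..1::real})) X H \<and>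
         (\<forall>t\<in>{0..1}. homeomorphic_map X X (\<lambda>x. H (x, t))) \<and>
         (\<forall>x\<in>topspace X. H (x, 0) = f x \<and> H (x, 1) = g x) \<and>
         (\<forall>x\<in>A. \<forall>t\<in>{0..1}. H (x, t) = x)"
  then obtain H where "continuous_map (prod_topology X (top_of_set {0..1::real})) X H"
         "(\<forall>t\<in>{0..1}. homeomorphic_map X X (\<lambda>x. H (x, t)))"
         "(\<forall>x\<in>topspace X. H (x, 0) = f x \<and> H (x, 1) = g x)" by (elim exE conjE)
  then show "\<exists>H. continuous_map (prod_topology X (top_of_set {0..1::real})) X H \<and>
         (\<forall>t\<in>{0..1}. homeomorphic_map X X (\<lambda>x. H (x, t))) \<and>
         (\<forall>x\<in>topspace X. H (x, 0) = f x \<and> H (x, 1) = g x) \<and>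
         (\<forall>x\<in>{}. \<forall>t\<in>{0..1}. H (x, t) = x)" by (intro exI[of _ H] conjI) simp_all
qed

theorem lemma2p1:
  fixes X :: "'a topology" and U :: "'a set" and f :: "'a \<Rightarrow> 'a"
  assumes "U \<subseteq> topspace X"
    and "\<And>V. openin X V \<Longrightarrow> U \<inter> V \<noteq> {} \<Longrightarrow> U \<subseteq> V"
    and "bij_betw f (topspace X) (topspace X)"
    and "\<And>x. x \<in> topspace X - U \<Longrightarrow> f x = x"
  shows "homeomorphic_map X X f \<and> isotopic X f id \<and> isotopic_rel X (topspace X - U) f id"
proof -
  have hf: "homeomorphic_map X X f" using homeo[OF assms] .
  have inU: "\<And>x. x \<in> U \<Longrightarrow> f x \<in> U" using fU[OF assms(1,3,4)] by blast
  define H where "H = (\<lambda>z::'a \<times> real. if snd z = 1 then fst z else f (fst z))"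
  have rel: "isotopic_rel X (topspace X - U) f id"
    unfolding isotopic_rel_def
  proof (rule exI[of _ H], intro conjI ballI)
    show "continuous_map (prod_topology X (top_of_set {0..1::real})) X H"
      unfolding continuous_map_def
    proof (intro conjI allI impI)
      show "H \<in> topspace (prod_topology X (top_of_set {0..1::real})) \<rightarrow> topspace X"
      proof
        fix z assume z: "z \<in> topspace (prod_topology X (top_of_set {0..1::real}))"
        then have x: "fst z \<in> topspace X" by (simp add: topspace_prod_topology mem_Times_iff)
        have "f (fst z) \<in> topspace X" using assms(3) x by (rule bij_betw_apply)
        then show "H z \<in> topspace X" using x unfolding H_def by simp
      qed
      fix V assume V: "openin X V"
      have e1: "{x \<in> topspace X. f x \<in> V} = V"
        using preimage_eq[OF assms(1,2,4) inU V] .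
      have Vs: "V \<subseteq> topspace X" using V by (rule openin_subset)
      have "{z \<in> topspace (prod_topology X (top_of_set {0..1::real})). H z \<in> V} = V \<times> {0..1}"
      proof (intro set_eqI iffI)
        fix z assume "z \<in> {z \<in> topspace (prod_topology X (top_of_set {0..1::real})). H z \<in> V}"
        then have z: "fst z \<in> topspace X" "snd z \<in> {0..1}" "H z \<in> V" by (simp_all add: topspace_prod_topology mem_Times_iff)
        have "fst z \<in> V"
        proof (cases "snd z = 1")
          case True then have "H z = fst z" by (simp add: H_def)
          then show ?thesis using z(3) by simp
        next
          case False then have "H z = f (fst z)" by (simp add: H_def)
          then have "f (fst z) \<in> V" using z(3) by simp
          then have "fst z \<in> {x \<in> topspace X. f x \<in> V}" using z(1) by simp
          then show ?thesis by (simp only: e1)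
        qed
        then show "z \<in> V \<times> {0..1}" using z by (simp add: mem_Times_iff)
      next
        fix z assume "z \<in> V \<times> {0..1::real}"
        then have z: "fst z \<in> V" "snd z \<in> {0..1}" by (simp_all add: mem_Times_iff)
        have x: "fst z \<in> topspace X" using z Vs by blast
        have "H z \<in> V"
        proof (cases "snd z = 1")
          case True then have "H z = fst z" by (simp add: H_def)
          then show ?thesis using z(1) by simp
        next
          case False then have "H z = f (fst z)" by (simp add: H_def)
          moreover have "fst z \<in> {x \<in> topspace X. f x \<in> V}" using z(1) by (simp only: e1)
          ultimately show ?thesis by simp
        qed
        then show "z \<in> {z \<in> topspace (prod_topology X (top_of_set {0..1::real})). H z \<in> V}"
          using x z by (simp add: topspace_prod_topology mem_Times_iff)
      qed
      then show "openin (prod_topology X (top_of_set {0..1::real})) {z \<in> topspace (prod_topology X (top_of_set {0..1::real})). H z \<in> V}"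
        using V by (simp add: openin_prod_Times_iff)
    qed
  next
    fix t :: real assume "t \<in> {0..1}"
    show "homeomorphic_map X X (\<lambda>x. H (x, t))"
    proof (cases "t = 1")
      case True
      then have "(\<lambda>x. H (x, t)) = id" by (auto simp: H_def)
      then show ?thesis by simp
    next
      case False
      then have "(\<lambda>x. H (x, t)) = f" by (auto simp: H_def)
      then show ?thesis using hf by simp
    qed
  next
    fix x assume "x \<in> topspace X"
    show "H (x, 0) = f x" by (simp add: H_def)
    show "H (x, 1) = id x" by (simp add: H_def)
  next
    fix x t assume "x \<in> topspace X - U" "t \<in> {0..1::real}"
    then show "H (x, t) = x" using assms(4) by (simp add: H_def)
  qed
  have "isotopic X f id"
    using rel unfolding isotopic_def by (rule rel_empty)
  from hf this rel show ?thesis by (intro conjI)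
qed

end
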